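(* A class of finite pointed $(\emptyset,[1])$-models is definable by a countable disjunction of $(\emptyset,[1])$-formulae of graded multimodal logic if and only if it is recognizable by the Weisfeiler–Leman algorithm.
   Context: $(\emptyset,[1])$-formulae of graded multimodal logic are generated by $\varphi ::= \top \mid \neg\varphi \mid (\varphi\land\varphi) \mid \langle 1\rangle_{\geq k}\varphi$ with $k\in\mathbb N$. A finite $(\emptyset,[1])$-model is $M=(W,R_1)$ with $W$ a nonempty finite set and $R_1\subseteq W\times W$; a pointed model is $(M,w)$ with $w\in W$; $(M,w)\models\langle1\rangle_{\geq k}\psi$ iff $|\{v:(w,v)\in R_1,\ (M,v)\models\psi\}|\geq k$, Boolean cases standard. A class $\mathcal K$ of finite pointed models is definable by a countable disjunction if there is a countable set $S$ of formulae with $(M,w)\in\mathcal K$ iff $(M,w)\models\varphi$ for some $\varphi\in S$, for every finite pointed model. Weisfeiler–Leman colors (canonical, injective color refinement): $c^M_0(w)=\ast$ (a fixed constant) for all $w$, and $c^M_{t+1}(w)=\big(c^M_t(w),\{\{c^M_t(v):(w,v)\in R_1\}\}\big)$, where $\{\{\cdot\}\}$ denotes the multiset. A class $\mathcal K$ of finite pointed $(\emptyset,[1])$-models is recognizable by the Weisfeiler–Leman algorithm if there is a set $F$ of colors such that, for every finite pointed model $(M,w)$, $(M,w)\in\mathcal K$ iff $c^M_t(w)\in F$ for some $t\in\mathbb N$. *)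

theory Defs
  imports Main "HOL-Library.Multiset" "HOL-Library.Countable_Set"
begin

datatype fm = Top | Neg fm | Conj fm fm | Dia nat fm

type_synonym 'a model = "'a set \<times> ('a \<times> 'a) set"
type_synonym 'a pmodel = "'a set \<times> ('a \<times> 'a) set \<times> 'a"

definition finite_pmodel :: "'a pmodel \<Rightarrow> bool" where
  "finite_pmodel P = (case P of (W, R, w) \<Rightarrow>
      W \<noteq> {} \<and> finite W \<and> R \<subseteq> W \<times> W \<and> w \<in> W)"

fun sat :: "'a model \<Rightarrow> 'a \<Rightarrow> fm \<Rightarrow> bool" where
  "sat M w Top = True"
| "sat M w (Neg \<phi>) = (\<not> sat M w \<phi>)"
| "sat M w (Conj \<phi> \<psi>) = (sat M w \<phi> \<and> sat M w \<psi>)"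
| "sat M w (Dia k \<phi>) = (card {v. (w, v) \<in> snd M \<and> sat M v \<phi>} \<ge> k)"

text \<open>Weisfeiler-Leman colours: canonical injective colour refinement.\<close>
datatype color = Star | Refine color "color multiset"

fun wl_color :: "'a model \<Rightarrow> nat \<Rightarrow> 'a \<Rightarrow> color" where
  "wl_color M 0 w = Star"
| "wl_color M (Suc t) w =
     Refine (wl_color M t w) (image_mset (wl_color M t) (mset_set {v. (w, v) \<in> snd M}))"

definition definable_countable_disj :: "'a pmodel set \<Rightarrow> bool" where
  "definable_countable_disj K = (\<exists>S :: fm set. countable S \<and>
     (\<forall>W R w. finite_pmodel (W, R, w) \<longrightarrow>
        ((W, R, w) \<in> K \<longleftrightarrow> (\<exists>\<phi>\<in>S. sat (W, R) w \<phi>))))"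

definition wl_recognizable :: "'a pmodel set \<Rightarrow> bool" where
  "wl_recognizable K = (\<exists>F :: color set.
     (\<forall>W R w. finite_pmodel (W, R, w) \<longrightarrow>
        ((W, R, w) \<in> K \<longleftrightarrow> (\<exists>t. wl_color (W, R) t w \<in> F))))"

end

theory Submission
  imports Defs
begin

instance fm :: countable by countable_datatype

fun dp :: "fm \<Rightarrow> nat" where
  "dp Top = 0"
| "dp (Neg p) = dp p"
| "dp (Conj p q) = max (dp p) (dp q)"
| "dp (Dia k p) = Suc (dp p)"

fun height :: "color \<Rightarrow> nat" where
  "height Star = 0"
| "height (Refine c m) = Suc (height c)"

lemma height_wl: "height (wl_color M t w) = t"
  by (induction t) auto

lemma wl_mono:
  "wl_color M n w = wl_color M' n w' \<Longrightarrow> m \<le> n \<Longrightarrow> wl_color M m w = wl_color M' m w'"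
proof (induction n)
  case 0 then show ?case by simp
next
  case (Suc n)
  then show ?case by (cases "m = Suc n") (auto simp: le_Suc_eq)
qed

lemma card_count:
  assumes "finite (snd M)"
  shows "card {v. (w, v) \<in> snd M \<and> Q v} =
     size (filter_mset (\<lambda>v. Q v) (mset_set {v. (w, v) \<in> snd M}))"
proof -
  have f: "finite {v. (w, v) \<in> snd M}"
    using finite_imageI[OF assms, of snd] by (rule finite_subset[rotated]) force
  have "{v. (w, v) \<in> snd M \<and> Q v} = {x \<in> {v. (w, v) \<in> snd M}. Q x}" by auto
  then show ?thesis using f by simp
qed

lemma invariance:
  fixes M :: "'a model" and M' :: "'a model"
  shows "finite (snd M) \<Longrightarrow> finite (snd M') \<Longrightarrow> wl_color M n w = wl_color M' n w'
   \<Longrightarrow> dp \<phi> \<le> n \<Longrightarrow> sat M w \<phi> = sat M' w' \<phi>"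
proof (induction \<phi> arbitrary: n w w' M M')
  case (Dia k \<psi>)
  then obtain n0 where n: "n = Suc n0" and d: "dp \<psi> \<le> n0"
    by (cases n) auto
  define P where "P d = (\<exists>(M''::'a model) v''. finite (snd M'') \<and> wl_color M'' n0 v'' = d \<and> sat M'' v'' \<psi>)" for d
  have key: "sat N v \<psi> = P (wl_color N n0 v)" if "finite (snd N)" for N :: "'a model" and v
  proof
    assume "sat N v \<psi>" then show "P (wl_color N n0 v)" unfolding P_def using that by blast
  next
    assume "P (wl_color N n0 v)"
    then obtain M'' :: "'a model" and v'' where m: "finite (snd M'')" "wl_color M'' n0 v'' = wl_color N n0 v" "sat M'' v'' \<psi>"
      unfolding P_def by blast
    show "sat N v \<psi>" using Dia.IH[OF that m(1) m(2)[symmetric] d] m(3) by simp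
  qed
  have eqm: "image_mset (wl_color M n0) (mset_set {v. (w, v) \<in> snd M}) =
             image_mset (wl_color M' n0) (mset_set {v. (w', v) \<in> snd M'})"
    using Dia.prems(3) n by simp
  have "card {v. (w, v) \<in> snd M \<and> sat M v \<psi>} =
        size (filter_mset P (image_mset (wl_color M n0) (mset_set {v. (w, v) \<in> snd M})))"
    using card_count[OF Dia.prems(1), of w "\<lambda>v. sat M v \<psi>"] key[OF Dia.prems(1)]
    by (simp add: filter_mset_image_mset)
  moreover have "card {v. (w', v) \<in> snd M' \<and> sat M' v \<psi>} =
        size (filter_mset P (image_mset (wl_color M' n0) (mset_set {v. (w', v) \<in> snd M'})))"
    using card_count[OF Dia.prems(2), of w' "\<lambda>v. sat M' v \<psi>"] key[OF Dia.prems(2)]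
    by (simp add: filter_mset_image_mset)
  ultimately show ?case using eqm by simp
next
  case Top then show ?case by simp
next
  case (Neg p) then show ?case by (metis dp.simps(2) sat.simps(2))
next
  case (Conj p q)
  have "sat M w p = sat M' w' p" using Conj.IH(1)[OF Conj.prems(1,2,3)] Conj.prems(4) by simp
  moreover have "sat M w q = sat M' w' q" using Conj.IH(2)[OF Conj.prems(1,2,3)] Conj.prems(4) by simp
  ultimately show ?case by simp
qed

definition conj_list :: "fm list \<Rightarrow> fm" where
  "conj_list xs = foldr Conj xs Top"

lemma sat_conj_list: "sat M w (conj_list xs) = (\<forall>p\<in>set xs. sat M w p)"
  unfolding conj_list_def by (induction xs) auto

fun chi :: "nat \<Rightarrow> color \<Rightarrow> fm" where
  "chi 0 c = (if c = Star then Top else Neg Top)"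
| "chi (Suc n) Star = Neg Top"
| "chi (Suc n) (Refine c m) =
     Conj (chi n c)
      (Conj (Neg (Dia (Suc (size m)) Top))
        (conj_list (map (\<lambda>d. Conj (Dia (count m d) (chi n d)) (Neg (Dia (Suc (count m d)) (chi n d))))
           (SOME xs. mset xs = m))))"

lemma ms_eq:
  fixes A m :: "'b multiset"
  assumes "\<forall>d\<in>#m. count A d = count m d" "size A \<le> size m"
  shows "A = m"
proof -
  have "m \<subseteq># A"
    apply (rule mset_subset_eqI) using assms(1) by (metis count_eq_zero_iff order_refl zero_le)
  then show ?thesis using assms(2) mset_subset_size
    by (metis not_less subset_mset.le_imp_less_or_eq)
qed

lemma chi_correct:
  assumes "finite (snd M)"
  shows "sat M w (chi n c) = (wl_color M n w = c)"
proof (induction n arbitrary: w c)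
  case 0 then show ?case by auto
next
  case (Suc n)
  show ?case
  proof (cases c)
    case Star then show ?thesis by simp
  next
    case (Refine c' m)
    define A where "A = image_mset (wl_color M n) (mset_set {v. (w, v) \<in> snd M})"
    obtain xs where xs: "(SOME xs. mset xs = m) = xs" "mset xs = m"
      by (metis (mono_tags) ex_mset someI_ex)
    have cnt: "card {v. (w, v) \<in> snd M \<and> sat M v (chi n d)} = count A d" for d
    proof -
      have "card {v. (w, v) \<in> snd M \<and> sat M v (chi n d)} =
        size (filter_mset (\<lambda>v. wl_color M n v = d) (mset_set {v. (w, v) \<in> snd M}))"
        using card_count[OF assms, of w "\<lambda>v. sat M v (chi n d)"] Suc.IH by simp
      also have "\<dots> = size (filter_mset (\<lambda>x. x = d) A)"
        unfolding A_def by (simp add: filter_mset_image_mset)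
      also have "\<dots> = count A d"
        by (metis filter_eq_replicate_mset size_replicate_mset)
      finally show ?thesis .
    qed
    have szA: "card {v. (w, v) \<in> snd M \<and> sat M v Top} = size A"
      using card_count[OF assms, of w "\<lambda>v. True"] unfolding A_def by simp
    have "sat M w (chi (Suc n) c) =
       (wl_color M n w = c' \<and> \<not> Suc (size m) \<le> size A \<and> (\<forall>d\<in>set xs. count m d \<le> count A d \<and> \<not> Suc (count m d) \<le> count A d))"
      using Refine xs Suc.IH cnt szA by (simp add: sat_conj_list)
    also have "\<dots> = (wl_color M n w = c' \<and> A = m)"
    proof
      assume h: "wl_color M n w = c' \<and> \<not> Suc (size m) \<le> size A \<and> (\<forall>d\<in>set xs. count m d \<le> count A d \<and> \<not> Suc (count m d) \<le> count A d)"
      then have "\<forall>d\<in>#m. count A d = count m d" using xs(2) by force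
      with h ms_eq show "wl_color M n w = c' \<and> A = m" by force
    qed auto
    finally show ?thesis using Refine A_def by simp
  qed
qed

lemma fin_R: "finite_pmodel (W, R, w) \<Longrightarrow> finite (snd (W, R))"
  unfolding finite_pmodel_def by (simp add: finite_subset[of R "W \<times> W"])

theorem corollary3:
  fixes K :: "'a pmodel set"
  shows "definable_countable_disj K \<longleftrightarrow> wl_recognizable K"
proof
  assume "definable_countable_disj K"
  then obtain S where S: "\<forall>W R w. finite_pmodel (W, R, w) \<longrightarrow>
        ((W, R, w) \<in> K \<longleftrightarrow> (\<exists>\<phi>\<in>S. sat (W, R) w \<phi>))"
    unfolding definable_countable_disj_def by blast
  define F where "F = {c. \<exists>\<phi>\<in>S. \<exists>W R (w::'a). finite_pmodel (W, R, w) \<and>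
        sat (W, R) w \<phi> \<and> c = wl_color (W, R) (dp \<phi>) w}"
  show "wl_recognizable K" unfolding wl_recognizable_def
  proof (intro exI allI impI)
    fix W R w assume fp: "finite_pmodel (W, R, (w::'a))"
    show "(W, R, w) \<in> K \<longleftrightarrow> (\<exists>t. wl_color (W, R) t w \<in> F)"
    proof
      assume "(W, R, w) \<in> K"
      then obtain \<phi> where "\<phi> \<in> S" "sat (W, R) w \<phi>" using S fp by blast
      then have "wl_color (W, R) (dp \<phi>) w \<in> F" unfolding F_def using fp by auto
      then show "\<exists>t. wl_color (W, R) t w \<in> F" by blast
    next
      assume "\<exists>t. wl_color (W, R) t w \<in> F"
      then obtain t \<phi> W' R' and w' :: 'a where "\<phi> \<in> S" "finite_pmodel (W', R', w')"
        "sat (W', R') w' \<phi>" and eq: "wl_color (W, R) t w = wl_color (W', R') (dp \<phi>) w'"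
        unfolding F_def by blast
      moreover have "t = dp \<phi>" using arg_cong[OF eq, of height] by (simp add: height_wl)
      ultimately have "sat (W, R) w \<phi>"
        using invariance[OF fin_R[OF fp] fin_R, of W' R' w' t w w' \<phi>] by auto
      then show "(W, R, w) \<in> K" using S fp \<open>\<phi> \<in> S\<close> by blast
    qed
  qed
next
  assume "wl_recognizable K"
  then obtain F where F: "\<forall>W R w. finite_pmodel (W, R, w) \<longrightarrow>
        ((W, R, w) \<in> K \<longleftrightarrow> (\<exists>t. wl_color (W, R) t w \<in> F))"
    unfolding wl_recognizable_def by blast
  show "definable_countable_disj K" unfolding definable_countable_disj_def
  proof (intro exI conjI allI impI)
    show "countable {chi n c | n c. c \<in> F}" by simp
    fix W R w assume fp: "finite_pmodel (W, R, (w::'a))"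
    show "(W, R, w) \<in> K \<longleftrightarrow> (\<exists>\<phi>\<in>{chi n c | n c. c \<in> F}. sat (W, R) w \<phi>)"
    proof
      assume "(W, R, w) \<in> K"
      then obtain t where "wl_color (W, R) t w \<in> F" using F fp by blast
      moreover have "sat (W, R) w (chi t (wl_color (W, R) t w))"
        using chi_correct[OF fin_R[OF fp]] by simp
      ultimately show "\<exists>\<phi>\<in>{chi n c | n c. c \<in> F}. sat (W, R) w \<phi>"
        by blast
    next
      assume "\<exists>\<phi>\<in>{chi n c | n c. c \<in> F}. sat (W, R) w \<phi>"
      then obtain n c where "c \<in> F" "sat (W, R) w (chi n c)" by blast
      then have "wl_color (W, R) n w \<in> F" using chi_correct[OF fin_R[OF fp]] by simp
      then show "(W, R, w) \<in> K" using F fp by blast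
    qed
  qed
qed

end
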